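(* Let $W_1,\dots,W_{15}$ be $15$ mutually unbiased weighing matrices of order $16$ and weight $9$. Let $Y\subset\mathbb{R}^{16}$ be the set of row vectors of $I_{16},\frac13W_1,\dots,\frac13W_{15}$ (so $|Y|=256$). Then the graph with vertex set $Y$ in which two distinct vectors are adjacent if and only if they are orthogonal is a strongly regular graph with parameters $(256,120,56,56)$.
   Context: A weighing matrix of order $n$ and weight $k$ is an $n\times n$ matrix $W$ with entries in $\{1,-1,0\}$ such that $WW^T=kI_n$. Two weighing matrices $W_1,W_2$ of order $n$ and weight $k$ are unbiased if $\frac{1}{\sqrt{k}}W_1W_2^T$ is also a weighing matrix of order $n$ and weight $k$; a set is mutually unbiased if any two distinct members are unbiased. A strongly regular graph with parameters $(v,k,\lambda,\mu)$ is a $k$-regular graph on $v$ vertices in which any two adjacent vertices have exactly $\lambda$ common neighbours and any two distinct non-adjacent vertices have exactly $\mu$ common neighbours. *)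

theory Defs
  imports "HOL-Analysis.Analysis" "HOL-Library.Numeral_Type"
begin

definition weighing_matrix :: "real^'n^'n \<Rightarrow> nat \<Rightarrow> bool" where
  "weighing_matrix W k \<longleftrightarrow>
     (\<forall>i j. W $ i $ j \<in> {1, -1, 0}) \<and> W ** transpose W = real k *\<^sub>R mat 1"

definition unbiased_weighing :: "real^'n^'n \<Rightarrow> real^'n^'n \<Rightarrow> nat \<Rightarrow> bool" where
  "unbiased_weighing W1 W2 k \<longleftrightarrow>
     weighing_matrix ((1 / sqrt (real k)) *\<^sub>R (W1 ** transpose W2)) k"

definition strongly_regular :: "'a set \<Rightarrow> ('a \<Rightarrow> 'a \<Rightarrow> bool) \<Rightarrow> nat \<Rightarrow> nat \<Rightarrow> nat \<Rightarrow> nat \<Rightarrow> bool" where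
  "strongly_regular V E v k l m \<longleftrightarrow>
     finite V \<and> card V = v \<and>
     (\<forall>x\<in>V. \<forall>y\<in>V. E x y \<longleftrightarrow> E y x) \<and> (\<forall>x\<in>V. \<not> E x x) \<and>
     (\<forall>x\<in>V. card {y\<in>V. E x y} = k) \<and>
     (\<forall>x\<in>V. \<forall>y\<in>V. x \<noteq> y \<and> E x y \<longrightarrow> card {z\<in>V. E x z \<and> E y z} = l) \<and>
     (\<forall>x\<in>V. \<forall>y\<in>V. x \<noteq> y \<and> \<not> E x y \<longrightarrow> card {z\<in>V. E x z \<and> E y z} = m)"

end

theory Submission
  imports Defs
begin

lemma sum4_pow:
  fixes A :: "'n::finite \<Rightarrow> real"
  shows "(\<Sum>a\<in>UNIV. \<Sum>b\<in>UNIV. \<Sum>c\<in>UNIV. \<Sum>e\<in>UNIV. A a * A b * A c * A e) = (sum A UNIV)^4"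
proof -
  have "(sum A UNIV)^4 = sum A UNIV * (sum A UNIV * (sum A UNIV * sum A UNIV))"
    by (simp add: power4_eq_xxxx mult.assoc)
  also have "\<dots> = (\<Sum>a\<in>UNIV. \<Sum>b\<in>UNIV. \<Sum>c\<in>UNIV. \<Sum>e\<in>UNIV. A e * (A c * (A b * A a)))"
    by (simp add: sum_distrib_left sum_distrib_right)
  finally show ?thesis by (simp add: mult_ac)
qed

lemma sum4_prod:
  fixes A B C D :: "'n::finite \<Rightarrow> real"
  shows "sum A UNIV * sum B UNIV * sum C UNIV * sum D UNIV = (\<Sum>a\<in>UNIV. \<Sum>b\<in>UNIV. \<Sum>c\<in>UNIV. \<Sum>e\<in>UNIV. A a * B b * C c * D e)"
proof -
  have "sum A UNIV * sum B UNIV * sum C UNIV * sum D UNIV = sum D UNIV * (sum C UNIV * (sum B UNIV * sum A UNIV))"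
    by (simp add: mult_ac)
  also have "\<dots> = (\<Sum>a\<in>UNIV. \<Sum>b\<in>UNIV. \<Sum>c\<in>UNIV. \<Sum>e\<in>UNIV. D e * (C c * (B b * A a)))"
    by (simp add: sum_distrib_left sum_distrib_right)
  finally show ?thesis by (simp add: mult_ac)
qed

definition dl :: "'n \<Rightarrow> 'n \<Rightarrow> real" where "dl a b = (if a = b then 1 else 0)"

lemma dl_sum1[simp]: "(\<Sum>b\<in>UNIV. f b * dl a b) = f (a::'n::finite)"
  by (simp add: dl_def if_distrib cong: if_cong)
lemma dl_sum2[simp]: "(\<Sum>b\<in>UNIV. f b * dl b a) = f (a::'n::finite)"
  by (simp add: dl_def if_distrib cong: if_cong)

lemma dl_sum1'[simp]: "(\<Sum>b\<in>UNIV. \<Sum>c\<in>UNIV. f b c * dl a b) = (\<Sum>c\<in>UNIV. f (a::'n::finite) c)"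
  by (subst sum.swap) simp
lemma dl_sum2'[simp]: "(\<Sum>b\<in>UNIV. \<Sum>c\<in>UNIV. f b c * dl b a) = (\<Sum>c\<in>UNIV. f (a::'n::finite) c)"
  by (subst sum.swap) simp

lemma z4M:
  fixes z :: "real^'n::finite"
  shows "(\<Sum>a\<in>UNIV. \<Sum>b\<in>UNIV. \<Sum>c\<in>UNIV. \<Sum>e\<in>UNIV. z$a*z$b*z$c*z$e * (dl a b * dl c e + dl a c * dl b e + dl b c * dl a e)) = 3 * (z \<bullet> z)^2"
  apply (simp only: distrib_left sum.distrib mult.assoc[symmetric] dl_sum1 dl_sum2 dl_sum1' dl_sum2')
  apply (simp add: inner_vec_def power2_eq_square sum_distrib_left sum_distrib_right mult_ac sum.distrib[symmetric])
  done

lemma swap4: "(\<Sum>a\<in>UNIV. \<Sum>b\<in>UNIV. \<Sum>c\<in>UNIV. \<Sum>e\<in>UNIV. \<Sum>p\<in>P. F a b c e p) = (\<Sum>p\<in>P. \<Sum>a\<in>UNIV. \<Sum>b\<in>UNIV. \<Sum>c\<in>UNIV. \<Sum>e\<in>UNIV. F a b c e p)"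
  by (simp only: sum.swap[where A=UNIV and B=P])

lemma design:
  fixes v :: "'i \<Rightarrow> real^'n::finite" and P :: "'i set" and k :: real
  assumes fin: "finite P" and nrm: "\<And>p. p\<in>P \<Longrightarrow> v p \<bullet> v p = 1"
   and s4: "(\<Sum>p\<in>P. \<Sum>q\<in>P. (v p \<bullet> v q)^4) = 3*k*card P"
   and kd: "k * (CARD('n) * (CARD('n)+2)) = card P"
  shows "(\<Sum>p\<in>P. (x \<bullet> v p)^2 * (y \<bullet> v p)^2) = k*((x\<bullet>x)*(y\<bullet>y) + 2*(x\<bullet>y)^2)"
proof -
  define M where "M a b c e = dl a b * dl c e + dl a c * dl b e + dl b c * dl a e" for a b c e :: 'n
  define S where "S a b c e = (\<Sum>p\<in>P. v p$a * v p$b * v p$c * v p$e)" for a b c e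
  have SS: "(\<Sum>a\<in>UNIV. \<Sum>b\<in>UNIV. \<Sum>c\<in>UNIV. \<Sum>e\<in>UNIV. S a b c e * S a b c e) = 3*k*card P"
  proof -
    have "(\<Sum>a\<in>UNIV. \<Sum>b\<in>UNIV. \<Sum>c\<in>UNIV. \<Sum>e\<in>UNIV. S a b c e * S a b c e)
       = (\<Sum>p\<in>P. \<Sum>q\<in>P. \<Sum>a\<in>UNIV. \<Sum>b\<in>UNIV. \<Sum>c\<in>UNIV. \<Sum>e\<in>UNIV. 
            (v p$a * v q$a) * (v p$b * v q$b) * (v p$c * v q$c) * (v p$e * v q$e))"
      unfolding S_def sum_product by (simp only: swap4) (simp add: mult_ac)
    also have "\<dots> = (\<Sum>p\<in>P. \<Sum>q\<in>P. (v p \<bullet> v q)^4)"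
      by (simp only: sum4_pow inner_vec_def inner_real_def)
    finally show ?thesis using s4 by simp
  qed
  have SM: "(\<Sum>a\<in>UNIV. \<Sum>b\<in>UNIV. \<Sum>c\<in>UNIV. \<Sum>e\<in>UNIV. S a b c e * M a b c e) = 3*card P"
  proof -
    have "(\<Sum>a\<in>UNIV. \<Sum>b\<in>UNIV. \<Sum>c\<in>UNIV. \<Sum>e\<in>UNIV. S a b c e * M a b c e)
      = (\<Sum>p\<in>P. \<Sum>a\<in>UNIV. \<Sum>b\<in>UNIV. \<Sum>c\<in>UNIV. \<Sum>e\<in>UNIV. v p$a * v p$b * v p$c * v p$e * (dl a b * dl c e + dl a c * dl b e + dl b c * dl a e))"
      unfolding S_def M_def sum_distrib_right by (simp only: swap4)
    also have "\<dots> = (\<Sum>p\<in>P. 3 * (v p \<bullet> v p)^2)"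
      by (simp only: z4M)
    also have "\<dots> = 3 * card P" using nrm by simp
    finally show ?thesis .
  qed
  have MM: "(\<Sum>a\<in>UNIV. \<Sum>b\<in>UNIV. \<Sum>c\<in>UNIV. \<Sum>e\<in>UNIV. M a b c e * M a b c e) = 3 * CARD('n) * (CARD('n) + 2)"
    unfolding M_def
    apply (simp only: distrib_left distrib_right sum.distrib mult.assoc[symmetric] dl_sum1 dl_sum2 dl_sum1' dl_sum2')
    apply (simp add: dl_def)
    done
  have TT: "(\<Sum>a\<in>UNIV. \<Sum>b\<in>UNIV. \<Sum>c\<in>UNIV. \<Sum>e\<in>UNIV. (S a b c e - k * M a b c e)^2) = 0"
  proof -
    have "(\<Sum>a\<in>UNIV. \<Sum>b\<in>UNIV. \<Sum>c\<in>UNIV. \<Sum>e\<in>UNIV. (S a b c e - k * M a b c e)^2)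
      = (\<Sum>a\<in>UNIV. \<Sum>b\<in>UNIV. \<Sum>c\<in>UNIV. \<Sum>e\<in>UNIV. S a b c e * S a b c e)
        - 2*k*(\<Sum>a\<in>UNIV. \<Sum>b\<in>UNIV. \<Sum>c\<in>UNIV. \<Sum>e\<in>UNIV. S a b c e * M a b c e)
        + k^2 * (\<Sum>a\<in>UNIV. \<Sum>b\<in>UNIV. \<Sum>c\<in>UNIV. \<Sum>e\<in>UNIV. M a b c e * M a b c e)"
      by (simp add: power2_eq_square algebra_simps sum.distrib sum_subtractf sum_distrib_left)
    also have "\<dots> = 0" unfolding SS SM MM of_nat_mult[of 3] unfolding kd[symmetric] by (simp add: algebra_simps power2_eq_square)
    finally show ?thesis .
  qed
  have T0: "S a b c e = k * M a b c e" for a b c e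
  proof -
    have "\<forall>a b c e. (S a b c e - k * M a b c e)^2 = 0"
      using TT by (simp add: sum_nonneg_eq_0_iff sum_nonneg)
    then show ?thesis by simp
  qed
  have "(\<Sum>p\<in>P. (x \<bullet> v p)^2 * (y \<bullet> v p)^2) = (\<Sum>p\<in>P. \<Sum>a\<in>UNIV. \<Sum>b\<in>UNIV. \<Sum>c\<in>UNIV. \<Sum>e\<in>UNIV.
     (x$a * v p$a) * (x$b * v p$b) * (y$c * v p$c) * (y$e * v p$e))"
    unfolding sum4_prod[symmetric] by (simp add: power2_eq_square inner_vec_def mult_ac)
  also have "\<dots> = (\<Sum>a\<in>UNIV. \<Sum>b\<in>UNIV. \<Sum>c\<in>UNIV. \<Sum>e\<in>UNIV. x$a * x$b * y$c * y$e * S a b c e)"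
    unfolding S_def sum_distrib_left swap4 by (simp add: mult_ac)
  also have "\<dots> = (\<Sum>a\<in>UNIV. \<Sum>b\<in>UNIV. \<Sum>c\<in>UNIV. \<Sum>e\<in>UNIV. k * (x$a * x$b * y$c * y$e * (dl a b * dl c e + dl a c * dl b e + dl b c * dl a e)))"
    unfolding T0 M_def by (simp add: mult_ac)
  also have "\<dots> = k*((x\<bullet>x)*(y\<bullet>y) + 2*(x\<bullet>y)^2)"
    unfolding sum_distrib_left[symmetric]
    apply (simp only: distrib_left sum.distrib mult.assoc[symmetric] dl_sum1 dl_sum2 dl_sum1' dl_sum2')
    apply (simp add: inner_vec_def power2_eq_square sum_distrib_left sum_distrib_right mult_ac sum.distrib[symmetric] add_ac)
    done
  finally show ?thesis .
qed

lemma rowinner: "((A::real^'n::finite^'m) ** transpose C) $ r $ s = A$r \<bullet> C$s"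
  by (simp add: matrix_matrix_mult_def transpose_def inner_vec_def)

lemma mat1_inner: "(mat 1 :: real^'n::finite^'n) $ r \<bullet> u = u $ r"
proof -
  have "\<And>P (x::real). (if P then 1 else 0) * x = (if P then x else 0)" by simp
  then show ?thesis by (simp add: mat_def inner_vec_def)
qed

lemma parseval:
  fixes B :: "real^'n::finite^'n"
  assumes "B ** transpose B = mat 1"
  shows "(\<Sum>r\<in>UNIV. (x \<bullet> B $ r)^2) = x \<bullet> x"
proof -
  have tb: "transpose B ** B = mat 1" using assms matrix_left_right_inverse by blast
  have e: "(\<Sum>r\<in>UNIV. B$r$a * B$r$b) = dl a b" for a b
  proof -
    have "(\<Sum>r\<in>UNIV. B$r$a * B$r$b) = (transpose B ** B) $ a $ b"
      by (simp add: matrix_matrix_mult_def transpose_def)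
    then show ?thesis by (simp add: tb mat_def dl_def)
  qed
  have "(\<Sum>r\<in>UNIV. (x \<bullet> B $ r)^2) = (\<Sum>r\<in>UNIV. \<Sum>a\<in>UNIV. \<Sum>b\<in>UNIV. x$a * x$b * (B$r$a * B$r$b))"
    by (simp add: power2_eq_square inner_vec_def sum_distrib_left sum_distrib_right mult_ac)
  also have "\<dots> = (\<Sum>a\<in>UNIV. \<Sum>b\<in>UNIV. x$a * x$b * (\<Sum>r\<in>UNIV. B$r$a * B$r$b))"
    by (simp add: sum_distrib_left) (subst sum.swap, rule sum.cong[OF refl], subst sum.swap, simp)
  also have "\<dots> = x \<bullet> x" by (simp add: e inner_vec_def)
  finally show ?thesis .
qed

lemma third: "(c::real) \<in> {0, 1/3, -1/3} \<Longrightarrow> c = 0 \<or> c^2 = 1/9"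
  by (elim insertE emptyE) (simp_all only: power2_eq_square, simp_all)

lemma four_gen: "(c::real)^2 = 1/9 \<Longrightarrow> c^4 = (1/9) * c^2"
proof -
  assume h: "c^2 = 1/9"
  have "c^4 = c^2 * c^2" by algebra
  then show ?thesis using h by simp
qed

lemma delta_sum:
  assumes "finite P" "p \<in> P"
  shows "(\<Sum>q\<in>P. (if p = q then 1 else 0) * g q) = (g p :: real)"
proof -
  have "(\<Sum>q\<in>P. (if p = q then 1 else 0) * g q) = (\<Sum>q\<in>P. if p = q then g q else 0)"
    by (rule sum.cong) auto
  then show ?thesis using assms by simp
qed

theorem mainTheorem13:
  fixes W :: "nat \<Rightarrow> real^16^16"
  assumes wm: "\<And>i. i \<in> {1..15} \<Longrightarrow> weighing_matrix (W i) 9"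
    and mu: "\<And>i j. i \<in> {1..15} \<Longrightarrow> j \<in> {1..15} \<Longrightarrow> i \<noteq> j \<Longrightarrow> unbiased_weighing (W i) (W j) 9"
  defines "Y \<equiv> {(mat 1 :: real^16^16) $ r | r. True} \<union> {(1/3) *\<^sub>R (W i $ r) | i r. i \<in> {1..15}}"
  shows "card Y = 256 \<and> strongly_regular Y (\<lambda>x y. x \<noteq> y \<and> x \<bullet> y = 0) 256 120 56 56"
proof -
  define B :: "nat \<Rightarrow> real^16^16" where "B i = (if i = 0 then mat 1 else (1/3) *\<^sub>R W i)" for i
  define v :: "nat \<times> 16 \<Rightarrow> real^16" where "v p = B (fst p) $ snd p" for p
  define P :: "(nat \<times> 16) set" where "P = {0..15} \<times> UNIV"
  have finP: "finite P" unfolding P_def by simp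
  have cardP: "card P = 256" unfolding P_def by (simp add: card_cartesian_product)
  have Wrow: "W i $ r \<bullet> W i $ s = (if r = s then 9 else 0)" if "i \<in> {1..15}" for i r s
  proof -
    have "W i ** transpose (W i) = real 9 *\<^sub>R mat 1" using wm[OF that] by (simp add: weighing_matrix_def)
    then have "(W i ** transpose (W i)) $ r $ s = 9 * (mat 1 :: real^16^16) $ r $ s" by simp
    then show ?thesis by (simp add: rowinner mat_def)
  qed
  have Went: "W i $ s $ r \<in> {1, -1, 0}" if "i \<in> {1..15}" for i r s
    using wm[OF that] by (simp add: weighing_matrix_def)
  have same: "B i $ r \<bullet> B i $ s = (if r = s then 1 else 0)" if "i \<in> {0..15}" for i r s
  proof (cases "i = 0")
    case True
    then have "B i $ r \<bullet> B i $ s = (mat 1 :: real^16^16) $ s $ r" by (simp add: B_def mat1_inner)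
    then show ?thesis by (simp add: mat_def)
  next
    case False
    then have "i \<in> {1..15}" using that by auto
    then show ?thesis using False by (simp add: B_def Wrow)
  qed
  have cross: "B i $ r \<bullet> B j $ s \<in> {0, 1/3, -1/3}" if "i \<in> {0..15}" "j \<in> {0..15}" "i \<noteq> j" for i j r s
  proof -
    have s9: "sqrt (real 9) = 3" by (rule real_sqrt_unique) auto
    have z: "B 0 $ r \<bullet> B j $ s \<in> {0, 1/3, -1/3}" if "j \<in> {1..15}" for j r s
    proof -
      have "B 0 $ r \<bullet> B j $ s = (1/3) * W j $ s $ r" using that by (simp add: B_def mat1_inner)
      then show ?thesis using Went[OF that, of s r] by auto
    qed
    show ?thesis
    proof (cases "i = 0")
      case True
      then show ?thesis using z[of j r s] that by auto
    next
      case False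
      note iF = False
      show ?thesis
      proof (cases "j = 0")
        case True
        then show ?thesis using z[of i s r] that iF by (auto simp: inner_commute)
      next
        case False
        have ij: "i \<in> {1..15}" "j \<in> {1..15}" using that iF False by auto
        have "weighing_matrix ((1 / sqrt (real 9)) *\<^sub>R (W i ** transpose (W j))) 9"
          using mu[OF ij that(3)] by (simp add: unbiased_weighing_def)
        then have "((1/3) *\<^sub>R (W i ** transpose (W j))) $ r $ s \<in> {1, -1, 0}"
          unfolding s9 weighing_matrix_def by blast
        then have "(1/3) * (W i $ r \<bullet> W j $ s) \<in> {1, -1, 0}" by (simp add: rowinner)
        moreover have "B i $ r \<bullet> B j $ s = (1/3) * ((1/3) * (W i $ r \<bullet> W j $ s))"
          using iF False by (simp add: B_def)
        ultimately show ?thesis by auto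
      qed
    qed
  qed
  have pair: "(p = q \<and> v p \<bullet> v q = 1) \<or> (p \<noteq> q \<and> v p \<bullet> v q = 0) \<or> (p \<noteq> q \<and> (v p \<bullet> v q)^2 = 1/9)"
    if "p \<in> P" "q \<in> P" for p q
  proof (cases "fst p = fst q")
    case True
    then show ?thesis using that same[of "fst p" "snd p" "snd q"] unfolding v_def P_def
      by (cases p, cases q) (auto split: if_splits)
  next
    case False
    then have "v p \<bullet> v q \<in> {0, 1/3, -1/3}" using that cross unfolding v_def P_def by (auto simp: mem_Times_iff)
    moreover have "p \<noteq> q" using False by auto
    ultimately show ?thesis using third by blast
  qed
  have vv: "v p \<bullet> v p = 1" if "p \<in> P" for p using pair[OF that that] by auto
  have inj: "inj_on v P"
  proof (rule inj_onI)
    fix p q assume pq: "p \<in> P" "q \<in> P" "v p = v q"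
    then have "v p \<bullet> v q = 1" using vv by simp
    then show "p = q" using pair[OF pq(1,2)] by auto
  qed
  have Yeq: "Y = v ` P"
  proof
    show "Y \<subseteq> v ` P"
    proof
      fix y assume "y \<in> Y"
      then consider r where "y = (mat 1 :: real^16^16) $ r" | i r where "i \<in> {1..15}" "y = (1/3) *\<^sub>R (W i $ r)"
        unfolding Y_def by blast
      then show "y \<in> v ` P"
      proof cases
        case (1 r)
        then have "y = v (0, r)" by (simp add: v_def B_def)
        moreover have "(0, r) \<in> P" unfolding P_def by auto
        ultimately show ?thesis by blast
      next
        case (2 i r)
        then have "y = v (i, r)" by (simp add: v_def B_def)
        moreover have "(i, r) \<in> P" using 2 unfolding P_def by auto
        ultimately show ?thesis by blast
      qed
    qed
  next
    show "v ` P \<subseteq> Y"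
    proof
      fix y assume "y \<in> v ` P"
      then obtain i r where ir: "i \<in> {0..15}" "y = v (i, r)" unfolding P_def by auto
      show "y \<in> Y"
      proof (cases "i = 0")
        case True then show ?thesis using ir unfolding Y_def by (auto simp: v_def B_def)
      next
        case False
        then have "i \<in> {1..15}" using ir by auto
        then show ?thesis using ir False unfolding Y_def by (auto simp: v_def B_def)
      qed
    qed
  qed
  have Bortho: "B i ** transpose (B i) = mat 1" if "i \<in> {0..15}" for i
    using same[OF that] by (simp add: vec_eq_iff rowinner mat_def)
  have sq: "(\<Sum>q\<in>P. (x \<bullet> v q)^2) = 16 * (x \<bullet> x)" for x
  proof -
    have "(\<Sum>q\<in>P. (x \<bullet> v q)^2) = (\<Sum>i\<in>{0..15::nat}. \<Sum>r\<in>UNIV. (x \<bullet> B i $ r)^2)"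
      unfolding P_def v_def by (simp add: sum.cartesian_product case_prod_beta)
    also have "\<dots> = (\<Sum>i\<in>{0..15::nat}. x \<bullet> x)"
      by (rule sum.cong[OF refl]) (simp add: parseval Bortho)
    finally show ?thesis by simp
  qed
  have four: "(v p \<bullet> v q)^4 = (1/9) * (v p \<bullet> v q)^2 + (8/9) * (if p = q then 1 else 0)"
    if "p \<in> P" "q \<in> P" for p q
    using pair[OF that] four_gen by auto
  have S4: "(\<Sum>p\<in>P. \<Sum>q\<in>P. (v p \<bullet> v q)^4) = 3 * (8/9) * card P"
  proof -
    have "(\<Sum>q\<in>P. (v p \<bullet> v q)^4) = 8/3" if "p \<in> P" for p
    proof -
      have "(\<Sum>q\<in>P. (v p \<bullet> v q)^4) = (\<Sum>q\<in>P. (1/9) * (v p \<bullet> v q)^2 + (8/9) * (if p = q then 1 else 0))"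
        using four that by (intro sum.cong) auto
      also have "\<dots> = (1/9) * (\<Sum>q\<in>P. (v p \<bullet> v q)^2) + (8/9) * (\<Sum>q\<in>P. (if p = q then 1 else 0))"
        by (simp add: sum.distrib sum_distrib_left)
      also have "\<dots> = 8/3" using sq[of "v p"] vv[OF that] that finP by simp
      finally show ?thesis .
    qed
    then have "(\<Sum>p\<in>P. \<Sum>q\<in>P. (v p \<bullet> v q)^4) = (\<Sum>p\<in>P. 8/3)" by (intro sum.cong) auto
    then show ?thesis using cardP by simp
  qed
  have D: "(\<Sum>q\<in>P. (x \<bullet> v q)^2 * (y \<bullet> v q)^2) = (8/9) * ((x\<bullet>x)*(y\<bullet>y) + 2*(x\<bullet>y)^2)" for x y
    by (rule design[OF finP vv S4]) (simp_all add: cardP)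
  define Ee where "Ee = (\<lambda>x y::real^16. x \<noteq> y \<and> x \<bullet> y = 0)"
  have fE: "(if Ee (v p) (v q) then 1 else 0 :: real) = 1 - 9*(v p \<bullet> v q)^2 + 8*(if p = q then 1 else 0)"
    if "p \<in> P" "q \<in> P" for p q
  proof -
    have "v p = v q \<longleftrightarrow> p = q" using inj that by (auto dest: inj_onD)
    then show ?thesis using pair[OF that] unfolding Ee_def by auto
  qed
  have cnt: "real (card {y\<in>Y. R y}) = (\<Sum>q\<in>P. if R (v q) then 1 else 0)" for R
  proof -
    have "{y\<in>Y. R y} = v ` {q\<in>P. R (v q)}" unfolding Yeq by auto
    then have "card {y\<in>Y. R y} = card {q\<in>P. R (v q)}"
      using card_image[OF inj_on_subset[OF inj]] by auto
    also have "real \<dots> = (\<Sum>q\<in>{q\<in>P. R (v q)}. 1)" by simp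
    also have "\<dots> = (\<Sum>q\<in>P. if R (v q) then 1 else 0)" using finP by (rule sum.inter_filter)
    finally show ?thesis .
  qed
  have deg: "card {y\<in>Y. Ee (v p) y} = 120" if "p \<in> P" for p
  proof -
    have "real (card {y\<in>Y. Ee (v p) y}) = (\<Sum>q\<in>P. 1 - 9*(v p \<bullet> v q)^2 + 8*(if p = q then 1 else 0))"
      unfolding cnt using fE that by (intro sum.cong) auto
    also have "\<dots> = real (card P) - 9 * (\<Sum>q\<in>P. (v p \<bullet> v q)^2) + 8 * (\<Sum>q\<in>P. (if p = q then 1 else 0))"
      by (simp add: sum.distrib sum_subtractf sum_distrib_left)
    also have "\<dots> = 120" using sq[of "v p"] vv[OF that] that finP cardP by simp
    finally show ?thesis by linarith
  qed
  have common: "card {z\<in>Y. Ee (v p1) z \<and> Ee (v p2) z} = 56" if "p1 \<in> P" "p2 \<in> P" "p1 \<noteq> p2" for p1 p2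
  proof -
    define c where "c = v p1 \<bullet> v p2"
    have pt: "(if Ee (v p1) (v q) \<and> Ee (v p2) (v q) then 1 else 0 :: real)
      = (1 - 9*(v p1 \<bullet> v q)^2 - 9*(v p2 \<bullet> v q)^2 + 81*((v p1 \<bullet> v q)^2*(v p2 \<bullet> v q)^2))
        + (if p1 = q then 1 else 0) * (8*(1 - 9*(v p2 \<bullet> v q)^2))
        + (if p2 = q then 1 else 0) * (8*(1 - 9*(v p1 \<bullet> v q)^2))" if "q \<in> P" for q
    proof -
      have "(if Ee (v p1) (v q) \<and> Ee (v p2) (v q) then 1 else 0 :: real)
         = (if Ee (v p1) (v q) then 1 else 0) * (if Ee (v p2) (v q) then 1 else 0)" by simp
      also have "\<dots> = (1 - 9*(v p1 \<bullet> v q)^2 + 8*(if p1 = q then 1 else 0)) * (1 - 9*(v p2 \<bullet> v q)^2 + 8*(if p2 = q then 1 else 0))"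
        using fE that \<open>p1 \<in> P\<close> \<open>p2 \<in> P\<close> by simp
      finally show ?thesis using \<open>p1 \<noteq> p2\<close> by (auto simp: algebra_simps)
    qed
    have "real (card {z\<in>Y. Ee (v p1) z \<and> Ee (v p2) z})
       = (\<Sum>q\<in>P. (1 - 9*(v p1 \<bullet> v q)^2 - 9*(v p2 \<bullet> v q)^2 + 81*((v p1 \<bullet> v q)^2*(v p2 \<bullet> v q)^2))
        + (if p1 = q then 1 else 0) * (8*(1 - 9*(v p2 \<bullet> v q)^2))
        + (if p2 = q then 1 else 0) * (8*(1 - 9*(v p1 \<bullet> v q)^2)))"
      unfolding cnt using pt by (intro sum.cong) auto
    also have "\<dots> = real (card P) - 9 * (\<Sum>q\<in>P. (v p1 \<bullet> v q)^2) - 9 * (\<Sum>q\<in>P. (v p2 \<bullet> v q)^2)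
        + 81 * (\<Sum>q\<in>P. (v p1 \<bullet> v q)^2*(v p2 \<bullet> v q)^2)
        + (\<Sum>q\<in>P. (if p1 = q then 1 else 0) * (8*(1 - 9*(v p2 \<bullet> v q)^2)))
        + (\<Sum>q\<in>P. (if p2 = q then 1 else 0) * (8*(1 - 9*(v p1 \<bullet> v q)^2)))"
      by (simp add: sum.distrib sum_subtractf sum_distrib_left)
    also have "\<dots> = 256 - 9*16 - 9*16 + 81 * ((8/9) * (1 + 2*c^2)) + 8*(1 - 9*c^2) + 8*(1 - 9*c^2)"
      unfolding D sq delta_sum[OF finP that(1)] delta_sum[OF finP that(2)]
      using vv that cardP by (simp add: c_def inner_commute)
    also have "\<dots> = 56" by (simp add: algebra_simps)
    finally show ?thesis by linarith
  qed
  have finY: "finite Y" unfolding Yeq using finP by simp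
  have cardY: "card Y = 256" unfolding Yeq using card_image[OF inj] cardP by simp
  have EeL: "(\<lambda>x y. x \<noteq> y \<and> x \<bullet> y = 0) = Ee" unfolding Ee_def by simp
  show ?thesis
    unfolding EeL strongly_regular_def
  proof (intro conjI ballI impI)
    show "finite Y" by (rule finY)
    show "card Y = 256" "card Y = 256" by (rule cardY)+
  next
    fix x y assume "x \<in> Y" "y \<in> Y" then show "Ee x y = Ee y x" unfolding Ee_def by (auto simp: inner_commute)
  next
    fix x assume "x \<in> Y" then show "\<not> Ee x x" unfolding Ee_def by simp
  next
    fix x assume "x \<in> Y"
    then obtain p where "p \<in> P" "x = v p" unfolding Yeq by auto
    then show "card {y \<in> Y. Ee x y} = 120" using deg by simp
  next
    fix x y assume xy: "x \<in> Y" "y \<in> Y" "x \<noteq> y \<and> Ee x y"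
    then obtain p1 p2 where "p1 \<in> P" "p2 \<in> P" "x = v p1" "y = v p2" unfolding Yeq by auto
    then show "card {z \<in> Y. Ee x z \<and> Ee y z} = 56" using common xy by blast
  next
    fix x y assume xy: "x \<in> Y" "y \<in> Y" "x \<noteq> y \<and> \<not> Ee x y"
    then obtain p1 p2 where "p1 \<in> P" "p2 \<in> P" "x = v p1" "y = v p2" unfolding Yeq by auto
    then show "card {z \<in> Y. Ee x z \<and> Ee y z} = 56" using common xy by blast
  qed
qed

end
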